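(* Let $x=\{x_i^t\}$ and $y=\{y_i^t\}$ be two arbitrary, possibly fractional, allocations and let $X_i^t=\sum_{\tau=1}^tx_i^\tau$. Then for every transaction $i$ and every horizon $T$, $$\sum_{t=1}^Tx_i^tv_i^t\ge\sum_{t=1}^TX_i^ty_i^tv_i^t.$$
   Context: Online block packing: $m$ resources with capacities $B_j>0$; transactions $i$ with arrival time $a_i\in\{1,2,\dots\}$, base value $v_i\ge0$, discount $\rho_i\in[0,1]$, demand $w_i\in\mathbb{R}_+^m$; $v_i^t:=v_i(1-\rho_i)^{t-a_i}$. A fractional allocation is $\{x_i^t\}$ with $x_i^t\in[0,1]$, $x_i^t=0$ for $t<a_i$, $\sum_tx_i^t\le1$, and $\sum_iw_{ij}x_i^t\le B_j$ for all $t,j$. *)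

theory Defs
  imports Complex_Main
begin

text \<open>Transactions form a finite set N (type 'a); resources are indexed by j < m;
 times are t = 1, 2, ...; w i j is the demand of transaction i on resource j.\<close>

definition val :: "('a \<Rightarrow> real) \<Rightarrow> ('a \<Rightarrow> real) \<Rightarrow> ('a \<Rightarrow> nat) \<Rightarrow> 'a \<Rightarrow> nat \<Rightarrow> real" where
  "val v \<rho> a i t = v i * (1 - \<rho> i) powi (int t - int (a i))"

definition is_allocation ::
  "'a set \<Rightarrow> nat \<Rightarrow> (nat \<Rightarrow> real) \<Rightarrow> ('a \<Rightarrow> nat \<Rightarrow> real) \<Rightarrow> ('a \<Rightarrow> nat)
   \<Rightarrow> ('a \<Rightarrow> nat \<Rightarrow> real) \<Rightarrow> bool" where
  "is_allocation N m B w a x \<longleftrightarrow>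
     (\<forall>i\<in>N. \<forall>t\<ge>1. 0 \<le> x i t \<and> x i t \<le> 1) \<and>
     (\<forall>i\<in>N. \<forall>t. 1 \<le> t \<and> t < a i \<longrightarrow> x i t = 0) \<and>
     (\<forall>i\<in>N. \<forall>T. (\<Sum>t=1..T. x i t) \<le> 1) \<and>
     (\<forall>t\<ge>1. \<forall>j<m. (\<Sum>i\<in>N. w i j * x i t) \<le> B j)"

end

theory Submission
  imports Defs
begin

lemma val_mono:
  assumes "0 \<le> r" "r \<le> 1" "a \<le> s" "s \<le> t" and that: "v \<ge> (0::real)"
  shows "v * (1 - r) powi (int t - int a) \<le> v * (1 - r) powi (int s - int a)"
proof -
  have e1: "int t - int a = int (t - a)" "int s - int a = int (s - a)" using assms by auto
  have "(1 - r) ^ (t - a) \<le> (1 - r) ^ (s - a)"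
    by (rule power_decreasing) (use assms in auto)
  thus ?thesis unfolding e1 power_int_of_nat using that by (simp add: mult_left_mono)
qed

theorem lemma2:
  fixes N :: "'a set" and m :: nat and B :: "nat \<Rightarrow> real"
    and w :: "'a \<Rightarrow> nat \<Rightarrow> real" and a :: "'a \<Rightarrow> nat"
    and v \<rho> :: "'a \<Rightarrow> real" and x y :: "'a \<Rightarrow> nat \<Rightarrow> real"
    and i :: 'a and T :: nat
  assumes "finite N"
    and "\<forall>j<m. B j > 0"
    and "\<forall>k\<in>N. a k \<ge> 1"
    and "\<forall>k\<in>N. v k \<ge> 0"
    and "\<forall>k\<in>N. 0 \<le> \<rho> k \<and> \<rho> k \<le> 1"
    and "\<forall>k\<in>N. \<forall>j<m. w k j \<ge> 0"
    and "is_allocation N m B w a x"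
    and "is_allocation N m B w a y"
    and "i \<in> N"
  shows "(\<Sum>t=1..T. x i t * val v \<rho> a i t)
         \<ge> (\<Sum>t=1..T. (\<Sum>\<tau>=1..t. x i \<tau>) * y i t * val v \<rho> a i t)"
proof -
  let ?V = "val v \<rho> a i"
  have x0: "\<And>t. t \<ge> 1 \<Longrightarrow> 0 \<le> x i t" and x1: "\<And>t. 1 \<le> t \<Longrightarrow> t < a i \<Longrightarrow> x i t = 0"
    using assms(7,9) unfolding is_allocation_def by auto
  have y0: "\<And>t. t \<ge> 1 \<Longrightarrow> 0 \<le> y i t" and ys: "\<And>T. (\<Sum>t=1..T. y i t) \<le> 1"
    using assms(8,9) unfolding is_allocation_def by auto
  have vi: "v i \<ge> 0" "0 \<le> \<rho> i" "\<rho> i \<le> 1" using assms(4,5,9) by auto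
  have vmono: "?V t \<le> ?V s" if "a i \<le> s" "s \<le> t" for s t
    unfolding val_def using val_mono[OF vi(2,3) that vi(1)] .
  have "(\<Sum>t=1..T. (\<Sum>\<tau>=1..t. x i \<tau>) * y i t * ?V t)
      = (\<Sum>t=1..T. \<Sum>\<tau>=1..T. (if \<tau> \<le> t then x i \<tau> * y i t * ?V t else 0))"
  proof (rule sum.cong[OF refl])
    fix t assume t: "t \<in> {1..T}"
    have "(\<Sum>\<tau>=1..T. (if \<tau> \<le> t then x i \<tau> * y i t * ?V t else 0))
        = (\<Sum>\<tau>\<in>{1..T} \<inter> {\<tau>. \<tau> \<le> t}. x i \<tau> * y i t * ?V t)"
      by (simp add: sum.inter_restrict)
    also have "{1..T} \<inter> {\<tau>. \<tau> \<le> t} = {1..t}" using t by auto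
    finally show "(\<Sum>\<tau>=1..t. x i \<tau>) * y i t * ?V t
        = (\<Sum>\<tau>=1..T. (if \<tau> \<le> t then x i \<tau> * y i t * ?V t else 0))"
      by (simp add: sum_distrib_right)
  qed
  also have "\<dots> = (\<Sum>\<tau>=1..T. \<Sum>t=1..T. (if \<tau> \<le> t then x i \<tau> * y i t * ?V t else 0))"
    by (rule sum.swap)
  also have "\<dots> \<le> (\<Sum>\<tau>=1..T. x i \<tau> * ?V \<tau> * (\<Sum>t=1..T. (if \<tau> \<le> t then y i t else 0)))"
  proof (rule sum_mono)
    fix \<tau> assume tau: "\<tau> \<in> {1..T}"
    show "(\<Sum>t=1..T. (if \<tau> \<le> t then x i \<tau> * y i t * ?V t else 0))
        \<le> x i \<tau> * ?V \<tau> * (\<Sum>t=1..T. (if \<tau> \<le> t then y i t else 0))"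
      unfolding sum_distrib_left
    proof (rule sum_mono)
      fix t assume t: "t \<in> {1..T}"
      show "(if \<tau> \<le> t then x i \<tau> * y i t * ?V t else 0)
          \<le> x i \<tau> * ?V \<tau> * (if \<tau> \<le> t then y i t else 0)"
      proof (cases "\<tau> \<le> t")
        case True
        show ?thesis
        proof (cases "\<tau> < a i")
          case True thus ?thesis using x1 tau by auto
        next
          case False
          have "?V t \<le> ?V \<tau>" using vmono False \<open>\<tau> \<le> t\<close> by simp
          moreover have "0 \<le> x i \<tau> * y i t" using x0 y0 tau t by auto
          ultimately have "x i \<tau> * y i t * ?V t \<le> x i \<tau> * y i t * ?V \<tau>"
            by (rule mult_left_mono)
          thus ?thesis using True by (simp add: algebra_simps)
        qed
      qed simp
    qed
  qed
  also have "\<dots> \<le> (\<Sum>\<tau>=1..T. x i \<tau> * ?V \<tau>)"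
  proof (rule sum_mono)
    fix \<tau> assume tau: "\<tau> \<in> {1..T}"
    have "(\<Sum>t=1..T. (if \<tau> \<le> t then y i t else 0)) \<le> (\<Sum>t=1..T. y i t)"
      by (rule sum_mono) (use y0 in auto)
    also have "\<dots> \<le> 1" by (rule ys)
    finally have s1: "(\<Sum>t=1..T. (if \<tau> \<le> t then y i t else 0)) \<le> 1" .
    have "0 \<le> x i \<tau> * ?V \<tau>"
      using x0 tau vi unfolding val_def by (auto intro!: mult_nonneg_nonneg)
    from mult_left_mono[OF s1 this] show "x i \<tau> * ?V \<tau> * (\<Sum>t=1..T. (if \<tau> \<le> t then y i t else 0))
        \<le> x i \<tau> * ?V \<tau>" by simp
  qed
  finally show ?thesis by simp
qed

end
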